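(* Let $\mathcal{P}$ be a partition of $\{1,\dots,n\}$. A subspace $\mathcal{U}$ of $\mathbb{R}^n$ is $\mathcal{P}$-realizable if and only if every subspace $\mathcal{U}'$ with $\mathcal{U}'\sim\mathcal{U}$ is realizable.
   Context: $G_{\mathcal{P}}$ is the group of $n\times n$ orthogonal $\mathcal{P}$-block-diagonal matrices; $\mathcal{U}\sim\mathcal{U}'$ means $\mathcal{U}'=Q\mathcal{U}$ for some $Q\in G_{\mathcal{P}}$. $\mathcal{E}_{\mathcal{P}}=\{Y\succeq0: Y_{\mathcal{I}}=I\text{ for all }\mathcal{I}\in\mathcal{P}\}$ ($Y_{\mathcal{I}}$ the principal submatrix indexed by $\mathcal{I}$); $\mathcal{U}$ is $\mathcal{P}$-realizable if some $Y\in\mathcal{E}_{\mathcal{P}}$ has nullspace containing $\mathcal{U}$. $\mathcal{U}$ is realizable if some positive semidefinite matrix with unit diagonal has nullspace containing $\mathcal{U}$. *)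

theory Defs
  imports "HOL-Analysis.Analysis"
begin

text \<open>Vectors in R^n are real^'n, n = CARD('n); matrices are real^'n^'n.
  The index set {1..n} is the finite type 'n.\<close>

definition is_partition :: "'n set set \<Rightarrow> bool" where
  "is_partition P \<longleftrightarrow> (\<forall>I\<in>P. I \<noteq> {}) \<and> \<Union>P = UNIV \<and>
     (\<forall>I\<in>P. \<forall>J\<in>P. I \<noteq> J \<longrightarrow> I \<inter> J = {})"

definition psd :: "real^'n^'n \<Rightarrow> bool" where
  "psd Y \<longleftrightarrow> transpose Y = Y \<and> (\<forall>x. 0 \<le> x \<bullet> (Y *v x))"

definition nullspace :: "real^'n^'n \<Rightarrow> (real^'n) set" where
  "nullspace Y = {x. Y *v x = 0}"

definition block_diagonal :: "'n set set \<Rightarrow> real^'n^'n \<Rightarrow> bool" where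
  "block_diagonal P Q \<longleftrightarrow> (\<forall>i j. Q $ i $ j \<noteq> 0 \<longrightarrow> (\<exists>I\<in>P. i \<in> I \<and> j \<in> I))"

definition G_P :: "'n set set \<Rightarrow> (real^'n^'n) set" where
  "G_P P = {Q. orthogonal_matrix Q \<and> block_diagonal P Q}"

definition equiv_P :: "'n set set \<Rightarrow> (real^'n) set \<Rightarrow> (real^'n) set \<Rightarrow> bool" where
  "equiv_P P U U' \<longleftrightarrow> (\<exists>Q\<in>G_P P. U' = (\<lambda>x. Q *v x) ` U)"

definition E_P :: "'n set set \<Rightarrow> (real^'n^'n) set" where
  "E_P P = {Y. psd Y \<and> (\<forall>I\<in>P. \<forall>i\<in>I. \<forall>j\<in>I. Y $ i $ j = (if i = j then 1 else 0))}"

definition P_realizable :: "'n set set \<Rightarrow> (real^'n) set \<Rightarrow> bool" where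
  "P_realizable P U \<longleftrightarrow> (\<exists>Y\<in>E_P P. U \<subseteq> nullspace Y)"

definition realizable :: "(real^'n) set \<Rightarrow> bool" where
  "realizable U \<longleftrightarrow> (\<exists>Y. psd Y \<and> (\<forall>i. Y $ i $ i = 1) \<and> U \<subseteq> nullspace Y)"

end

theory Submission
  imports Defs
begin

lemma inner_mat_vec: "(x::real^'n::finite) \<bullet> (Q *v w) = (transpose Q *v x) \<bullet> w"
  by (metis dot_lmul_matrix transpose_matrix_vector inner_commute)

lemma sym_form:
  fixes W :: "real^'n::finite^'n"
  assumes "transpose W = W"
  shows "a \<bullet> (W *v b) = b \<bullet> (W *v a)"
  using inner_mat_vec[of a W b] assms by (simp add: inner_commute)

lemma quad_zero:
  fixes c e :: real
  assumes "\<And>t. 2*t*c + t*t*e \<le> 0"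
  shows "c = 0"
proof (rule ccontr)
  assume "c \<noteq> 0"
  define t where "t = c / (\<bar>e\<bar> + 1)"
  have pos: "\<bar>e\<bar> + 1 > 0" by simp
  have "2*t*c + t*t*e \<le> 0" by (rule assms)
  hence "(2*t*c + t*t*e) * (\<bar>e\<bar> + 1)^2 \<le> 0" using pos by (simp add: mult_nonpos_nonneg)
  also have "(2*t*c + t*t*e) * (\<bar>e\<bar> + 1)^2 = c*c * (2*(\<bar>e\<bar>+1) + e)"
  proof -
    have ta: "t * (\<bar>e\<bar> + 1) = c" unfolding t_def using pos by simp
    have "(2*t*c + t*t*e) * (\<bar>e\<bar> + 1)^2 = 2*c*(t * (\<bar>e\<bar> + 1))*(\<bar>e\<bar> + 1) + (t * (\<bar>e\<bar> + 1))*(t * (\<bar>e\<bar> + 1))*e"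
      by (simp add: algebra_simps power2_eq_square)
    thus ?thesis unfolding ta by (simp add: algebra_simps)
  qed
  finally have "c*c * (2*(\<bar>e\<bar>+1) + e) \<le> 0" .
  moreover have "2*(\<bar>e\<bar>+1) + e > 0" by (cases "e \<ge> 0") auto
  moreover have "c*c > 0" using \<open>c \<noteq> 0\<close> by (auto simp add: zero_less_mult_iff linorder_neq_iff)
  ultimately show False by (metis mult_pos_pos not_le)
qed

lemma rayleigh_eig:
  fixes W :: "real^'n::finite^'n"
  assumes sym: "transpose W = W" and V: "subspace V" and inv: "\<forall>x\<in>V. W *v x \<in> V"
    and ne: "V \<noteq> {0}"
  shows "\<exists>x\<in>V. norm x = 1 \<and> (\<exists>c. W *v x = c *\<^sub>R x)"
proof -
  define S where "S = V \<inter> sphere 0 1"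
  define f where "f = (\<lambda>x. x \<bullet> (W *v x))"
  have "compact (sphere 0 1 \<inter> V)"
    by (rule compact_Int_closed[OF compact_sphere closed_subspace[OF V]])
  hence "compact S" unfolding S_def by (simp add: Int_commute)
  moreover have "S \<noteq> {}"
  proof -
    obtain v where v: "v \<in> V" "v \<noteq> 0" using ne V subspace_0 by blast
    hence "(1/norm v) *\<^sub>R v \<in> S" unfolding S_def using V
      by (simp add: subspace_scale)
    thus ?thesis by blast
  qed
  moreover have "continuous_on S f"
    unfolding f_def matrix_vector_mult_def by (intro continuous_intros)
  ultimately obtain x where xS: "x \<in> S" and xmax: "\<forall>y\<in>S. f y \<le> f x"
    using continuous_attains_sup by blast
  define l where "l = f x"
  have xV: "x \<in> V" and nx: "norm x = 1" using xS unfolding S_def by auto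
  have xx: "x \<bullet> x = 1" using nx by (simp add: norm_eq_1)
  have key: "y \<bullet> (W *v x) = 0" if yV: "y \<in> V" and yx: "y \<bullet> x = 0" for y
  proof (rule quad_zero[where e = "f y - l * (y \<bullet> y)"])
    fix t :: real
    define z where "z = x + t *\<^sub>R y"
    have zV: "z \<in> V" unfolding z_def using xV yV V by (simp add: subspace_add subspace_scale)
    have nz: "z \<bullet> z = 1 + t*t*(y \<bullet> y)"
      unfolding z_def using xx yx by (simp add: inner_add_left inner_add_right inner_commute algebra_simps)
    hence zpos: "z \<bullet> z > 0" by (simp add: add_pos_nonneg)
    hence "norm z > 0" by (metis inner_zero_left less_irrefl zero_less_norm_iff)
    define z' where "z' = (1/norm z) *\<^sub>R z"
    have "z' \<in> S" unfolding S_def z'_def using zV V \<open>norm z > 0\<close> by (simp add: subspace_scale)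
    hence "f z' \<le> l" using xmax l_def by blast
    moreover have "f z' = f z / (z \<bullet> z)"
      unfolding f_def z'_def by (simp add: matrix_vector_mult_scaleR power2_norm_eq_inner[symmetric] power2_eq_square)
    ultimately have "f z \<le> l * (z \<bullet> z)" using zpos by (simp add: divide_le_eq)
    moreover have "f z = l + 2*t*(y \<bullet> (W *v x)) + t*t*f y"
      unfolding f_def z_def l_def using sym_form[OF sym, of x y]
      by (simp add: matrix_vector_right_distrib inner_add_left inner_add_right matrix_vector_mult_scaleR algebra_simps)
    ultimately show "2*t*(y \<bullet> (W *v x)) + t*t*(f y - l * (y \<bullet> y)) \<le> 0"
      using nz by (simp add: algebra_simps)
  qed
  define y0 where "y0 = W *v x - l *\<^sub>R x"
  have y0V: "y0 \<in> V" unfolding y0_def using inv xV V by (simp add: subspace_diff subspace_scale)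
  have y0x: "y0 \<bullet> x = 0" unfolding y0_def l_def f_def using xx
    by (simp add: inner_diff_left inner_diff_right inner_commute)
  have "y0 \<bullet> y0 = y0 \<bullet> (W *v x) - l * (y0 \<bullet> x)"
    unfolding y0_def by (simp add: inner_diff_right inner_diff_left)
  hence "y0 \<bullet> y0 = 0" using key[OF y0V y0x] y0x by simp
  hence "y0 = 0" by simp
  hence "W *v x = l *\<^sub>R x" unfolding y0_def by simp
  thus ?thesis using xV nx by blast
qed


lemma spectral_sub:
  fixes W :: "real^'n::finite^'n"
  assumes sym: "transpose W = W"
  shows "subspace V \<Longrightarrow> (\<forall>x\<in>V. W *v x \<in> V) \<Longrightarrow>
    \<exists>B. B \<subseteq> V \<and> pairwise orthogonal B \<and> (\<forall>b\<in>B. norm b = 1 \<and> (\<exists>c. W *v b = c *\<^sub>R b)) \<and> V \<subseteq> span B"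
proof (induction "dim V" arbitrary: V rule: less_induct)
  case (less V)
  show ?case
  proof (cases "V = {0}")
    case True
    thus ?thesis by (intro exI[of _ "{}"]) auto
  next
    case False
    obtain x c where xV: "x \<in> V" and nx: "norm x = 1" and ev: "W *v x = c *\<^sub>R x"
      using rayleigh_eig[OF sym less.prems False] by blast
    define V' where "V' = {y\<in>V. y \<bullet> x = 0}"
    have sV': "subspace V'" unfolding V'_def subspace_def using less.prems(1)
      by (auto simp: subspace_def inner_add_left)
    have iV': "\<forall>y\<in>V'. W *v y \<in> V'"
    proof
      fix y assume y: "y \<in> V'"
      have "(W *v y) \<bullet> x = x \<bullet> (W *v y)" by (simp add: inner_commute)
      also have "\<dots> = y \<bullet> (W *v x)" by (rule sym_form[OF sym])
      also have "\<dots> = 0" using y ev unfolding V'_def by simp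
      finally show "W *v y \<in> V'" using y less.prems(2) unfolding V'_def by auto
    qed
    have "x \<notin> V'" using nx unfolding V'_def by (auto simp: norm_eq_1)
    moreover have "V' \<subseteq> V" unfolding V'_def by auto
    ultimately have "V' \<subset> V" using xV by blast
    hence "dim V' < dim V"
      using dim_psubset[of V' V] span_eq_iff sV' less.prems(1) by metis
    then obtain B' where B': "B' \<subseteq> V'" "pairwise orthogonal B'"
      "\<forall>b\<in>B'. norm b = 1 \<and> (\<exists>c. W *v b = c *\<^sub>R b)" "V' \<subseteq> span B'"
      using less.hyps[OF _ sV' iV'] by blast
    define B where "B = insert x B'"
    have "B \<subseteq> V" using B'(1) xV unfolding B_def V'_def by auto
    moreover have "pairwise orthogonal B"
      unfolding B_def using B'(1,2) unfolding V'_def pairwise_def orthogonal_def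
      by (auto simp: inner_commute)
    moreover have "\<forall>b\<in>B. norm b = 1 \<and> (\<exists>c. W *v b = c *\<^sub>R b)"
      unfolding B_def using B'(3) nx ev by auto
    moreover have "V \<subseteq> span B"
    proof
      fix v assume v: "v \<in> V"
      define w where "w = v - (v \<bullet> x) *\<^sub>R x"
      have "w \<in> V'" unfolding V'_def w_def using v xV less.prems(1) nx
        by (simp add: subspace_diff subspace_scale inner_diff_left norm_eq_1)
      hence "w \<in> span B" using B'(4) span_mono[of B' B] unfolding B_def by blast
      moreover have "(v \<bullet> x) *\<^sub>R x \<in> span B" unfolding B_def by (simp add: span_base span_scale)
      ultimately have "w + (v \<bullet> x) *\<^sub>R x \<in> span B" by (rule span_add)
      thus "v \<in> span B" unfolding w_def by simp
    qed
    ultimately show ?thesis by blast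
  qed
qed


lemma part_unique:
  assumes "is_partition P" "I \<in> P" "J \<in> P" "i \<in> I" "i \<in> J"
  shows "I = J"
  using assms unfolding is_partition_def by blast

lemma part_ex:
  assumes "is_partition P"
  shows "\<exists>I\<in>P. i \<in> I"
  using assms unfolding is_partition_def by blast

lemma dim_block:
  "dim {x::real^'n::finite. \<forall>k. k \<notin> I \<longrightarrow> x$k = 0} = card I"
proof -
  let ?V = "{x::real^'n::finite. \<forall>k. k \<notin> I \<longrightarrow> x$k = 0}"
  let ?B = "(\<lambda>i. axis i (1::real)) ` I"
  have "?B \<subseteq> ?V" by (auto simp: axis_def)
  moreover have "?V \<subseteq> span ?B"
  proof
    fix x assume x: "x \<in> ?V"
    have "x = (\<Sum>i\<in>I. x$i *\<^sub>R axis i 1)"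
      using x by (auto simp: vec_eq_iff axis_def sum_component if_distrib cong: if_cong)
    moreover have "(\<Sum>i\<in>I. x$i *\<^sub>R axis i (1::real)) \<in> span ?B"
      by (intro span_sum span_scale span_base) auto
    ultimately show "x \<in> span ?B" by simp
  qed
  moreover have "independent ?B"
    by (rule independent_mono[OF independent_Basis]) (auto simp: Basis_vec_def)
  ultimately have "card ?B = dim ?V" by (rule basis_card_eq_dim)
  moreover have "card ?B = card I"
    by (rule card_image) (auto simp: inj_on_def axis_eq_axis)
  ultimately show ?thesis by simp
qed

lemma block_eig:
  fixes W :: "real^'n::finite^'n"
  assumes P: "is_partition P" and sym: "transpose W = W" and bW: "block_diagonal P W"
  shows "\<exists>Q\<in>G_P P. \<forall>i j. i \<noteq> j \<longrightarrow> (transpose Q ** W ** Q)$i$j = 0"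
proof -
  define VI where "VI I = {x::real^'n. \<forall>k. k \<notin> I \<longrightarrow> x$k = 0}" for I
  have ex: "\<exists>\<beta>. inj_on \<beta> I \<and> (\<forall>i\<in>I. \<beta> i \<in> VI I \<and> norm (\<beta> i) = 1 \<and> (\<exists>c. W *v \<beta> i = c *\<^sub>R \<beta> i))
      \<and> (\<forall>i\<in>I. \<forall>j\<in>I. i \<noteq> j \<longrightarrow> \<beta> i \<bullet> \<beta> j = 0)" if I: "I \<in> P" for I
  proof -
    have sub: "subspace (VI I)" unfolding VI_def subspace_def by auto
    have inv: "\<forall>x\<in>VI I. W *v x \<in> VI I"
    proof
      fix x assume x: "x \<in> VI I"
      show "W *v x \<in> VI I" unfolding VI_def
      proof (intro CollectI allI impI)
        fix k assume k: "k \<notin> I"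
        have "W$k$j * x$j = 0" for j
        proof (cases "x$j = 0")
          case False
          hence jI: "j \<in> I" using x unfolding VI_def by blast
          have "W$k$j = 0"
          proof (rule ccontr)
            assume "W$k$j \<noteq> 0"
            then obtain J where "J \<in> P" "k \<in> J" "j \<in> J" using bW unfolding block_diagonal_def by blast
            thus False using part_unique[OF P I, of J j] jI k by blast
          qed
          thus ?thesis by simp
        qed simp
        thus "(W *v x)$k = 0" by (simp add: matrix_vector_mult_def sum.neutral)
      qed
    qed
    obtain B where B: "B \<subseteq> VI I" "pairwise orthogonal B"
      "\<forall>b\<in>B. norm b = 1 \<and> (\<exists>c. W *v b = c *\<^sub>R b)" "VI I \<subseteq> span B"
      using spectral_sub[OF sym sub inv] by blast
    have "0 \<notin> B" using B(3) by force
    hence "independent B" using B(2) pairwise_orthogonal_independent by blast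
    hence "card B = dim (VI I)" using B(1,4) basis_card_eq_dim by blast
    hence cB: "card B = card I" unfolding VI_def by (simp add: dim_block)
    have "finite B" using \<open>independent B\<close> finiteI_independent by blast
    then obtain \<beta> where bij: "bij_betw \<beta> I B"
      using cB finite_same_card_bij[of I B] by auto
    show ?thesis
    proof (rule exI[of _ \<beta>], intro conjI)
      show "inj_on \<beta> I" using bij by (simp add: bij_betw_def)
      have bi: "\<beta> i \<in> B" if "i \<in> I" for i using bij that by (auto simp: bij_betw_def)
      show "\<forall>i\<in>I. \<beta> i \<in> VI I \<and> norm (\<beta> i) = 1 \<and> (\<exists>c. W *v \<beta> i = c *\<^sub>R \<beta> i)"
        using bi B(1,3) by blast
      show "\<forall>i\<in>I. \<forall>j\<in>I. i \<noteq> j \<longrightarrow> \<beta> i \<bullet> \<beta> j = 0"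
      proof (intro ballI impI)
        fix i j assume i: "i \<in> I" and j: "j \<in> I" and ij: "i \<noteq> j"
        hence "\<beta> i \<noteq> \<beta> j" using bij by (auto simp: bij_betw_def inj_on_def)
        thus "\<beta> i \<bullet> \<beta> j = 0" using bi[OF i] bi[OF j] B(2) unfolding pairwise_def orthogonal_def by blast
      qed
    qed
  qed
  obtain \<beta> where \<beta>: "\<forall>I\<in>P. inj_on (\<beta> I) I \<and> (\<forall>i\<in>I. \<beta> I i \<in> VI I \<and> norm (\<beta> I i) = 1 \<and> (\<exists>c. W *v \<beta> I i = c *\<^sub>R \<beta> I i))
      \<and> (\<forall>i\<in>I. \<forall>j\<in>I. i \<noteq> j \<longrightarrow> \<beta> I i \<bullet> \<beta> I j = 0)"
  proof -
    have "\<forall>I\<in>P. \<exists>\<beta>. inj_on \<beta> I \<and> (\<forall>i\<in>I. \<beta> i \<in> VI I \<and> norm (\<beta> i) = 1 \<and> (\<exists>c. W *v \<beta> i = c *\<^sub>R \<beta> i))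
      \<and> (\<forall>i\<in>I. \<forall>j\<in>I. i \<noteq> j \<longrightarrow> \<beta> i \<bullet> \<beta> j = 0)" using ex by (rule ballI)
    from bchoice[OF this] show ?thesis by (elim exE) (rule that)
  qed
  define blk where "blk i = (SOME I. I \<in> P \<and> i \<in> I)" for i
  have blk: "blk i \<in> P \<and> i \<in> blk i" for i
  proof -
    obtain I where "I \<in> P" "i \<in> I" using part_ex[OF P, of i] by blast
    hence "\<exists>I. I \<in> P \<and> i \<in> I" by blast
    thus ?thesis unfolding blk_def by (rule someI_ex)
  qed
  define col where "col i = \<beta> (blk i) i" for i
  have colall: "col i \<in> VI (blk i) \<and> norm (col i) = 1 \<and> (\<exists>c. W *v col i = c *\<^sub>R col i)" for i
  proof -
    have "\<forall>i'\<in>blk i. \<beta> (blk i) i' \<in> VI (blk i) \<and> norm (\<beta> (blk i) i') = 1 \<and> (\<exists>c. W *v \<beta> (blk i) i' = c *\<^sub>R \<beta> (blk i) i')"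
      by (rule conjunct1[OF conjunct2[OF bspec[OF \<beta> conjunct1[OF blk[of i]]]]])
    from bspec[OF this, of i] blk[of i] show ?thesis unfolding col_def by simp
  qed
  have colV: "col i \<in> VI (blk i)" and coln: "norm (col i) = 1" and colE: "\<exists>c. W *v col i = c *\<^sub>R col i" for i
    using colall[of i] by auto
  have colO: "col i \<bullet> col j = 0" if ij: "i \<noteq> j" for i j
  proof (cases "blk i = blk j")
    case True
    have "\<forall>i'\<in>blk i. \<forall>j'\<in>blk i. i' \<noteq> j' \<longrightarrow> \<beta> (blk i) i' \<bullet> \<beta> (blk i) j' = 0"
      by (rule conjunct2[OF conjunct2[OF bspec[OF \<beta> conjunct1[OF blk[of i]]]]])
    hence "\<beta> (blk i) i \<bullet> \<beta> (blk i) j = 0" using blk[of i] blk[of j] True ij by auto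
    thus ?thesis unfolding col_def using True by simp
  next
    case False
    have "col i $ k * col j $ k = 0" for k
    proof (cases "col i $ k = 0")
      case False
      hence "k \<in> blk i" using colV[of i] unfolding VI_def by blast
      hence "k \<notin> blk j" using part_unique[OF P, of "blk i" "blk j" k] blk \<open>blk i \<noteq> blk j\<close> by blast
      hence "col j $ k = 0" using colV[of j] unfolding VI_def by blast
      thus ?thesis by simp
    qed simp
    thus ?thesis by (simp add: inner_vec_def sum.neutral)
  qed
  define Q where "Q = (\<chi> k i. col i $ k)"
  have colQ: "column i Q = col i" for i unfolding Q_def column_def by (simp add: vec_eq_iff)
  have tQQ: "transpose Q ** Q = mat 1"
    unfolding matrix_mult_transpose_dot_column colQ
  proof (rule vec_eq_iff[THEN iffD2], intro allI)
    fix i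
    show "(\<chi> i j. col i \<bullet> col j) $ i = mat 1 $ i"
    proof (rule vec_eq_iff[THEN iffD2], intro allI)
      fix j
      show "(\<chi> i j. col i \<bullet> col j) $ i $ j = mat 1 $ i $ j"
        using colO[of i j] coln[of i] by (cases "i = j") (simp_all add: mat_def norm_eq_1)
    qed
  qed
  have "Q \<in> G_P P"
    unfolding G_P_def
  proof (intro CollectI conjI)
    show "orthogonal_matrix Q" using tQQ by (simp add: orthogonal_matrix)
    show "block_diagonal P Q" unfolding block_diagonal_def
    proof (intro allI impI)
      fix k i assume "Q$k$i \<noteq> 0"
      hence "col i $ k \<noteq> 0" unfolding Q_def by simp
      hence "k \<in> blk i" using colV[of i] unfolding VI_def by blast
      thus "\<exists>I\<in>P. k \<in> I \<and> i \<in> I" using blk[of i] by blast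
    qed
  qed
  moreover have "(transpose Q ** W ** Q)$i$j = 0" if "i \<noteq> j" for i j
  proof -
    obtain c where c: "W *v col j = c *\<^sub>R col j" using colE by blast
    have "(transpose Q ** W ** Q)$i$j = (\<Sum>k\<in>UNIV. \<Sum>l\<in>UNIV. col i $ l * W$l$k * col j $ k)"
      unfolding Q_def by (simp add: matrix_matrix_mult_def transpose_def sum_distrib_right)
    also have "\<dots> = (\<Sum>l\<in>UNIV. \<Sum>k\<in>UNIV. col i $ l * W$l$k * col j $ k)"
      by (rule sum.swap)
    also have "\<dots> = col i \<bullet> (W *v col j)"
      by (simp add: matrix_vector_mult_def inner_vec_def sum_distrib_left mult.assoc)
    finally have "(transpose Q ** W ** Q)$i$j = col i \<bullet> (W *v col j)" .
    also have "\<dots> = 0" using c colO[OF that] by simp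
    finally show ?thesis .
  qed
  ultimately show ?thesis by blast
qed

lemma ax_form: "axis i 1 \<bullet> ((Y::real^'n::finite^'n) *v axis j 1) = Y$i$j"
  by (simp add: matrix_vector_mult_basis column_def inner_axis' )

lemma psd_sym: "psd Y \<Longrightarrow> Y$j$i = Y$i$j"
  unfolding psd_def by (metis transpose_def vec_lambda_beta)

lemma psd_diag_nonneg: "psd Y \<Longrightarrow> 0 \<le> Y$i$i"
  using ax_form[of i Y i] unfolding psd_def by metis

lemma psd_quad2:
  fixes Y :: "real^'n::finite^'n"
  assumes "psd Y"
  shows "0 \<le> Y$i$i + 2 * s * Y$i$j + s * s * Y$j$j"
proof -
  let ?x = "axis i 1 + s *\<^sub>R axis j (1::real)"
  have "0 \<le> ?x \<bullet> (Y *v ?x)" using assms unfolding psd_def by blast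
  also have "?x \<bullet> (Y *v ?x) = Y$i$i + s * Y$i$j + s * Y$j$i + s * s * Y$j$j"
    by (simp add: matrix_vector_right_distrib inner_add_left inner_add_right ax_form
        matrix_vector_mult_scaleR algebra_simps)
  finally show ?thesis using psd_sym[OF assms, of i j] by simp
qed

lemma psd_offdiag:
  fixes Y :: "real^'n::finite^'n"
  assumes "psd Y"
  shows "2*\<bar>Y$i$j\<bar> \<le> Y$i$i + Y$j$j"
  using psd_quad2[OF assms, of i 1 j] psd_quad2[OF assms, of i "-1" j] by linarith


lemma bd_entry:
  assumes "is_partition P" "block_diagonal P Q" "I \<in> P" "i \<in> I" "Q$i$k \<noteq> 0"
  shows "k \<in> I"
  using assms part_unique[OF assms(1)] unfolding block_diagonal_def by metis

lemma fwd:
  fixes Q Y :: "real^'n::finite^'n"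
  assumes P: "is_partition P" and Y: "Y \<in> E_P P" and U: "U \<subseteq> nullspace Y" and Q: "Q \<in> G_P P"
  shows "realizable ((\<lambda>x. Q *v x) ` U)"
proof -
  define Y' where "Y' = Q ** Y ** transpose Q"
  have psdY: "psd Y" using Y by (simp add: E_P_def)
  have oQ: "orthogonal_matrix Q" and bQ: "block_diagonal P Q" using Q by (auto simp: G_P_def)
  have "psd Y'"
    unfolding psd_def
  proof
    show "transpose Y' = Y'" using psdY unfolding Y'_def psd_def
      by (simp add: matrix_transpose_mul matrix_mul_assoc)
    show "\<forall>x. 0 \<le> x \<bullet> (Y' *v x)"
    proof
      fix x
      have "x \<bullet> (Y' *v x) = (transpose Q *v x) \<bullet> (Y *v (transpose Q *v x))"
        unfolding Y'_def by (simp add: matrix_vector_mul_assoc[symmetric] inner_mat_vec)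
      thus "0 \<le> x \<bullet> (Y' *v x)" using psdY unfolding psd_def by simp
    qed
  qed
  moreover have "\<forall>i. Y'$i$i = 1"
  proof
    fix i
    obtain I where I: "I \<in> P" "i \<in> I" using part_ex[OF P] by blast
    have inner: "Q$i$k * (\<Sum>l\<in>UNIV. Y$k$l * Q$i$l) = Q$i$k * Q$i$k" for k
    proof (cases "Q$i$k = 0")
      case True thus ?thesis by simp
    next
      case False
      hence kI: "k \<in> I" using bd_entry[OF P bQ I] by blast
      have "(\<Sum>l\<in>UNIV. Y$k$l * Q$i$l) = (\<Sum>l\<in>UNIV. if l = k then Q$i$l else 0)"
      proof (rule sum.cong[OF refl])
        fix l
        show "Y$k$l * Q$i$l = (if l = k then Q$i$l else 0)"
        proof (cases "Q$i$l = 0")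
          case True thus ?thesis by auto
        next
          case False
          hence "l \<in> I" using bd_entry[OF P bQ I] by blast
          thus ?thesis using Y kI I(1) unfolding E_P_def by auto
        qed
      qed
      thus ?thesis by simp
    qed
    have "Y'$i$i = (\<Sum>k\<in>UNIV. Q$i$k * (\<Sum>l\<in>UNIV. Y$k$l * Q$i$l))"
      unfolding Y'_def by (simp add: matrix_matrix_mult_def transpose_def sum_distrib_left sum_distrib_right mult.assoc)
        (rule sum.swap)
    also have "\<dots> = (\<Sum>k\<in>UNIV. Q$i$k * Q$i$k)" by (simp only: inner)
    also have "\<dots> = (Q ** transpose Q)$i$i" by (simp add: matrix_matrix_mult_def transpose_def)
    also have "\<dots> = 1" using oQ by (simp add: orthogonal_matrix_def mat_def)
    finally show "Y'$i$i = 1" .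
  qed
  moreover have "(\<lambda>x. Q *v x) ` U \<subseteq> nullspace Y'"
  proof
    fix y assume "y \<in> (\<lambda>x. Q *v x) ` U"
    then obtain u where u: "u \<in> U" "y = Q *v u" by blast
    have "Y *v u = 0" using U u by (auto simp: nullspace_def)
    moreover have "transpose Q ** Q = mat 1" using oQ by (simp add: orthogonal_matrix_def)
    ultimately have "Y' *v y = 0"
    proof -
      assume a: "Y *v u = 0" "transpose Q ** Q = mat 1"
      have "transpose Q *v (Q *v u) = u" using a(2) by (simp add: matrix_vector_mul_assoc)
      hence "Y' *v y = Q *v (Y *v u)" unfolding Y'_def u by (simp add: matrix_vector_mul_assoc[symmetric])
      thus ?thesis using a(1) by simp
    qed
    thus "y \<in> nullspace Y'" by (simp add: nullspace_def)
  qed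
  ultimately show ?thesis unfolding realizable_def by blast
qed

lemma psd_conj:
  fixes Q Y :: "real^'n::finite^'n"
  assumes psdY: "psd Y"
  shows "psd (Q ** Y ** transpose Q)"
  unfolding psd_def
proof
  show "transpose (Q ** Y ** transpose Q) = Q ** Y ** transpose Q" using psdY unfolding psd_def
    by (simp add: matrix_transpose_mul matrix_mul_assoc)
  show "\<forall>x. 0 \<le> x \<bullet> ((Q ** Y ** transpose Q) *v x)"
  proof
    fix x
    have "x \<bullet> ((Q ** Y ** transpose Q) *v x) = (transpose Q *v x) \<bullet> (Y *v (transpose Q *v x))"
      by (simp add: matrix_vector_mul_assoc[symmetric] inner_mat_vec)
    thus "0 \<le> x \<bullet> ((Q ** Y ** transpose Q) *v x)" using psdY unfolding psd_def by simp
  qed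
qed

lemma psd_diag_le_trace: "psd Y \<Longrightarrow> Y$i$i \<le> trace Y"
  unfolding trace_def
  by (rule member_le_sum) (auto intro: psd_diag_nonneg)

lemma psd_trace_nonneg: "psd Y \<Longrightarrow> 0 \<le> trace Y"
  unfolding trace_def by (rule sum_nonneg) (auto intro: psd_diag_nonneg)

lemma psd_entry_le_trace:
  fixes Y :: "real^'n::finite^'n"
  assumes "psd Y"
  shows "\<bar>Y$i$j\<bar> \<le> trace Y"
proof (cases "i = j")
  case True
  thus ?thesis using psd_diag_nonneg[OF assms, of i] psd_diag_le_trace[OF assms, of i] by simp
next
  case False
  show ?thesis using psd_offdiag[OF assms, of i j] psd_diag_le_trace[OF assms, of i]
      psd_diag_le_trace[OF assms, of j] by linarith
qed

lemma inner_mat1: "mat 1 \<bullet> (M::real^'n::finite^'n) = trace M"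
proof -
  have "mat 1 \<bullet> M = (\<Sum>i\<in>UNIV. \<Sum>j\<in>UNIV. (if i = j then 1 else 0) * M$i$j)"
    by (simp add: inner_vec_def mat_def)
  also have "\<dots> = (\<Sum>i\<in>UNIV. \<Sum>j\<in>UNIV. if i = j then M$i$i else 0)"
    by (rule sum.cong[OF refl], rule sum.cong[OF refl]) auto
  also have "\<dots> = (\<Sum>i\<in>UNIV. M$i$i)"
    by simp
  finally show ?thesis by (simp add: trace_def)
qed

lemma inner_trace: "(A::real^'n::finite^'n) \<bullet> B = trace (transpose A ** B)"
  by (simp add: inner_vec_def trace_def matrix_matrix_mult_def transpose_def) (rule sum.swap)

lemma trace_scaleR: "trace (c *\<^sub>R (A::real^'n::finite^'n)) = c * trace A"
  by (simp add: trace_def sum_distrib_left)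

lemma psd_scale: "psd Y \<Longrightarrow> 0 \<le> c \<Longrightarrow> psd (c *\<^sub>R Y)"
  unfolding psd_def by (simp add: transpose_scalar scaleR_matrix_vector_assoc[symmetric])

lemma compact_K1:
  fixes U :: "(real^'n::finite) set"
  shows "compact {Y::real^'n^'n. psd Y \<and> U \<subseteq> nullspace Y \<and> trace Y = t}"
proof -
  let ?K = "{Y::real^'n^'n. psd Y \<and> U \<subseteq> nullspace Y \<and> trace Y = t}"
  have eq: "?K = {Y. transpose Y = Y} \<inter> (\<Inter>x. {Y. 0 \<le> x \<bullet> (Y *v x)}) \<inter> (\<Inter>u\<in>U. {Y. Y *v u = 0})
      \<inter> {Y. trace Y = t}"
    by (auto simp: psd_def nullspace_def)
  have c1: "continuous_on UNIV (\<lambda>Y::real^'n^'n. transpose Y)"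
    unfolding transpose_def by (intro continuous_intros)
  have c2: "continuous_on UNIV (\<lambda>Y::real^'n^'n. x \<bullet> (Y *v x))" for x
    unfolding matrix_vector_mult_def by (intro continuous_intros)
  have c3: "continuous_on UNIV (\<lambda>Y::real^'n^'n. Y *v u)" for u
    unfolding matrix_vector_mult_def by (intro continuous_intros)
  have c4: "continuous_on UNIV (\<lambda>Y::real^'n^'n. trace Y)"
    unfolding trace_def by (intro continuous_intros)
  have "closed ?K" unfolding eq
    by (intro closed_Int closed_INT ballI closed_Collect_eq closed_Collect_le c1 c2 c3 c4 continuous_on_id continuous_on_const)
  moreover have "bounded ?K"
    unfolding bounded_iff
  proof (intro exI ballI)
    fix Y assume Y: "Y \<in> ?K"
    hence pY: "psd Y" and tY: "trace Y = t" by auto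
    have row: "norm (Y$i) \<le> real CARD('n) * t" for i
    proof -
      have "norm (Y$i) \<le> (\<Sum>j\<in>UNIV. \<bar>Y$i$j\<bar>)" by (rule norm_le_l1_cart)
      also have "\<dots> \<le> (\<Sum>j\<in>(UNIV::'n set). t)"
        by (rule sum_mono) (use psd_entry_le_trace[OF pY] tY in auto)
      finally show ?thesis by simp
    qed
    have "norm Y \<le> (\<Sum>i\<in>UNIV. norm (Y$i))"
      unfolding norm_vec_def by (rule L2_set_le_sum) simp
    also have "\<dots> \<le> (\<Sum>i\<in>(UNIV::'n set). real CARD('n) * t)" by (rule sum_mono) (rule row)
    finally show "norm Y \<le> real CARD('n) * (real CARD('n) * t)" by simp
  qed
  ultimately show ?thesis by (simp add: compact_eq_bounded_closed)
qed

lemma convex_K1: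
  fixes U :: "(real^'n::finite) set"
  shows "convex {Y::real^'n^'n. psd Y \<and> U \<subseteq> nullspace Y \<and> trace Y = t}"
  unfolding convex_def
proof (intro ballI allI impI)
  fix Y Z :: "real^'n^'n" and a b :: real
  assume Y: "Y \<in> {Y. psd Y \<and> U \<subseteq> nullspace Y \<and> trace Y = t}"
    and Z: "Z \<in> {Y. psd Y \<and> U \<subseteq> nullspace Y \<and> trace Y = t}"
    and ab: "0 \<le> a" "0 \<le> b" "a + b = 1"
  have tr: "transpose (a *\<^sub>R Y + b *\<^sub>R Z) = a *\<^sub>R transpose Y + b *\<^sub>R transpose Z"
    by (simp add: transpose_def vec_eq_iff)
  have mv: "(a *\<^sub>R Y + b *\<^sub>R Z) *v x = a *\<^sub>R (Y *v x) + b *\<^sub>R (Z *v x)" for x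
    by (simp add: matrix_vector_mult_add_rdistrib scaleR_matrix_vector_assoc)
  have "psd (a *\<^sub>R Y + b *\<^sub>R Z)"
    unfolding psd_def
  proof
    show "transpose (a *\<^sub>R Y + b *\<^sub>R Z) = a *\<^sub>R Y + b *\<^sub>R Z" using Y Z tr by (simp add: psd_def)
    show "\<forall>x. 0 \<le> x \<bullet> ((a *\<^sub>R Y + b *\<^sub>R Z) *v x)"
    proof
      fix x
      have "0 \<le> x \<bullet> (Y *v x)" "0 \<le> x \<bullet> (Z *v x)" using Y Z by (auto simp: psd_def)
      thus "0 \<le> x \<bullet> ((a *\<^sub>R Y + b *\<^sub>R Z) *v x)" unfolding mv using ab
        by (simp add: inner_add_right)
    qed
  qed
  moreover have "U \<subseteq> nullspace (a *\<^sub>R Y + b *\<^sub>R Z)"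
    using Y Z by (auto simp: nullspace_def mv subset_eq)
  moreover have "trace (a *\<^sub>R Y + b *\<^sub>R Z) = t"
    using Y Z ab by (simp add: trace_add trace_scaleR algebra_simps)
    (metis distrib_right mult_1)
  ultimately show "a *\<^sub>R Y + b *\<^sub>R Z \<in> {Y. psd Y \<and> U \<subseteq> nullspace Y \<and> trace Y = t}" by blast
qed

lemma bwd:
  fixes P :: "'n::finite set set" and U :: "(real^'n) set"
  assumes P: "is_partition P"
    and H: "\<forall>U'. equiv_P P U U' \<longrightarrow> realizable U'"
  shows "P_realizable P U"
proof (rule ccontr)
  assume notP: "\<not> P_realizable P U"
  define n where "n = real CARD('n)"
  have npos: "n > 0" unfolding n_def by simp
  define sb where "sb i j = (\<exists>I\<in>P. i \<in> I \<and> j \<in> I)" for i j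
  have sb_sym: "sb i j = sb j i" for i j unfolding sb_def by blast
  have sb_refl: "sb i i" for i unfolding sb_def using part_ex[OF P] by blast
  define BD where "BD Y = (\<chi> i j. (if sb i j then 1 else 0) * Y$i$j)" for Y :: "real^'n^'n"
  define K1 where "K1 = {Y::real^'n^'n. psd Y \<and> U \<subseteq> nullspace Y \<and> trace Y = n}"
  define C where "C = BD ` K1"
  have linBD: "linear BD"
    by (rule linearI) (simp_all add: BD_def vec_eq_iff algebra_simps)
  have contBD: "continuous_on K1 BD"
    unfolding BD_def by (intro continuous_intros)
  have "compact C" unfolding C_def K1_def
    by (rule compact_continuous_image[OF contBD[unfolded K1_def] compact_K1])
  hence clC: "closed C" by (rule compact_imp_closed)
  have cvC: "convex C" unfolding C_def K1_def by (rule convex_linear_image[OF linBD convex_K1])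
  have notin: "mat 1 \<notin> C"
  proof
    assume "mat 1 \<in> C"
    then obtain Y where Y: "Y \<in> K1" "BD Y = mat 1" unfolding C_def by (metis imageE)
    have "Y \<in> E_P P" unfolding E_P_def
    proof (intro CollectI conjI ballI)
      show "psd Y" using Y unfolding K1_def by blast
      fix I i j assume "I \<in> P" "i \<in> I" "j \<in> I"
      hence "sb i j" unfolding sb_def by blast
      hence "BD Y $ i $ j = Y$i$j" unfolding BD_def by simp
      thus "Y$i$j = (if i = j then 1 else 0)" using Y(2) by (simp add: mat_def)
    qed
    moreover have "U \<subseteq> nullspace Y" using Y unfolding K1_def by blast
    ultimately show False using notP unfolding P_realizable_def by blast
  qed
  obtain a b where ab: "a \<bullet> mat 1 < b" "\<forall>x\<in>C. b < a \<bullet> x"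
    using separating_hyperplane_closed_point[OF cvC clC notin] by blast
  define W0 where "W0 = a - (b / n) *\<^sub>R mat 1"
  have trBD: "trace (BD Y) = trace Y" for Y
    unfolding trace_def BD_def using sb_refl by simp
  have W0pos: "0 \<le> W0 \<bullet> BD Y" if Y: "psd Y" "U \<subseteq> nullspace Y" for Y
  proof (cases "trace Y = 0")
    case True
    hence "Y = 0" using psd_entry_le_trace[OF Y(1)] by (force simp: vec_eq_iff)
    thus ?thesis by (simp add: BD_def inner_vec_def)
  next
    case False
    hence tpos: "trace Y > 0" using psd_trace_nonneg[OF Y(1)] by simp
    define c where "c = n / trace Y"
    have cpos: "c > 0" unfolding c_def using tpos npos by simp
    have "c *\<^sub>R Y \<in> K1" unfolding K1_def
      using psd_scale[OF Y(1), of c] cpos Y(2) tpos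
      by (auto simp: nullspace_def trace_scaleR c_def subset_eq scaleR_matrix_vector_assoc[symmetric])
    hence "BD (c *\<^sub>R Y) \<in> C" unfolding C_def by blast
    hence "b < a \<bullet> BD (c *\<^sub>R Y)" using ab(2) by blast
    moreover have "BD (c *\<^sub>R Y) = c *\<^sub>R BD Y" using linBD by (simp add: linear_scale)
    moreover have "mat 1 \<bullet> BD Y = trace Y" by (simp add: inner_mat1 trBD)
    ultimately have "b < c * (a \<bullet> BD Y)" by simp
    hence "b / c < a \<bullet> BD Y" using cpos by (simp add: divide_less_eq mult.commute)
    moreover have "b / c = (b / n) * trace Y" unfolding c_def using npos tpos by simp
    ultimately have "(b / n) * trace Y \<le> a \<bullet> BD Y" by simp
    thus ?thesis unfolding W0_def using \<open>mat 1 \<bullet> BD Y = trace Y\<close>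
      by (simp add: inner_diff_left)
  qed
  have W0neg: "W0 \<bullet> mat 1 < 0"
  proof -
    have "mat 1 \<bullet> (mat 1 :: real^'n^'n) = n" by (simp add: inner_mat1 trace_I n_def)
    hence "W0 \<bullet> mat 1 = a \<bullet> mat 1 - b" unfolding W0_def using npos by (simp add: inner_diff_left)
    thus ?thesis using ab(1) by simp
  qed
  define W where "W = (\<chi> i j. if sb i j then (W0$i$j + W0$j$i) / 2 else 0)"
  have symW: "transpose W = W"
  proof (rule vec_eq_iff[THEN iffD2], intro allI, rule vec_eq_iff[THEN iffD2], intro allI)
    fix i j
    show "transpose W $ i $ j = W $ i $ j"
      unfolding W_def transpose_def using sb_sym[of j i] by (simp add: add.commute)
  qed
  have bdW: "block_diagonal P W"
    unfolding block_diagonal_def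
  proof (intro allI impI)
    fix i j assume "W$i$j \<noteq> 0"
    hence "sb i j" unfolding W_def by (auto split: if_splits)
    thus "\<exists>I\<in>P. i \<in> I \<and> j \<in> I" unfolding sb_def .
  qed
  have WY: "W \<bullet> Y = W0 \<bullet> BD Y" if Ys: "transpose Y = Y" for Y
  proof -
    have ys: "Y$j$i = Y$i$j" for i j using Ys by (metis transpose_def vec_lambda_beta)
    define g where "g i j = (if sb i j then W0$i$j * Y$i$j else 0)" for i j
    have "W \<bullet> Y = (\<Sum>i\<in>UNIV. \<Sum>j\<in>UNIV. W$i$j * Y$i$j)" by (simp add: inner_vec_def)
    also have "\<dots> = (\<Sum>i\<in>UNIV. \<Sum>j\<in>UNIV. (g i j + g j i) / 2)"
    proof (rule sum.cong[OF refl], rule sum.cong[OF refl])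
      fix i j
      show "W$i$j * Y$i$j = (g i j + g j i) / 2"
        unfolding W_def g_def using ys[of i j] sb_sym[of i j]
        by (cases "sb i j") (simp_all add: algebra_simps add_divide_distrib)
    qed
    also have "\<dots> = (\<Sum>i\<in>UNIV. \<Sum>j\<in>UNIV. g i j + g j i) / 2"
      by (simp only: sum_divide_distrib)
    also have "\<dots> = ((\<Sum>i\<in>UNIV. \<Sum>j\<in>UNIV. g i j) + (\<Sum>i\<in>UNIV. \<Sum>j\<in>UNIV. g j i)) / 2"
      by (simp only: sum.distrib)
    also have "(\<Sum>i\<in>UNIV. \<Sum>j\<in>UNIV. g j i) = (\<Sum>i\<in>UNIV. \<Sum>j\<in>UNIV. g i j)"
      by (rule sum.swap)
    also have "(\<Sum>i\<in>UNIV. \<Sum>j\<in>UNIV. g i j) = W0 \<bullet> BD Y"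
    proof -
      have "W0 \<bullet> BD Y = (\<Sum>i\<in>UNIV. \<Sum>j\<in>UNIV. W0$i$j * BD Y$i$j)" by (simp add: inner_vec_def)
      also have "\<dots> = (\<Sum>i\<in>UNIV. \<Sum>j\<in>UNIV. g i j)"
      proof (rule sum.cong[OF refl], rule sum.cong[OF refl])
        fix i j show "W0$i$j * BD Y$i$j = g i j" unfolding g_def BD_def by (cases "sb i j") simp_all
      qed
      finally show ?thesis by simp
    qed
    finally show ?thesis by simp
  qed
  have trW: "trace W < 0"
  proof -
    have "trace W = trace W0" unfolding W_def trace_def using sb_refl by simp
    also have "\<dots> = W0 \<bullet> mat 1" by (metis inner_mat1 inner_commute)
    finally show ?thesis using W0neg by simp
  qed
  obtain Q where Q: "Q \<in> G_P P" and D: "\<forall>i j. i \<noteq> j \<longrightarrow> (transpose Q ** W ** Q)$i$j = 0"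
    using block_eig[OF P symW bdW] by blast
  have oQ: "orthogonal_matrix Q" and bQ: "block_diagonal P Q" using Q by (auto simp: G_P_def)
  have "transpose Q \<in> G_P P"
    unfolding G_P_def
  proof (intro CollectI conjI)
    show "orthogonal_matrix (transpose Q)" using oQ by simp
    show "block_diagonal P (transpose Q)" unfolding block_diagonal_def
    proof (intro allI impI)
      fix i j assume "transpose Q $ i $ j \<noteq> 0"
      hence "Q $ j $ i \<noteq> 0" by (simp add: transpose_def)
      then obtain I where "I \<in> P" "j \<in> I" "i \<in> I" using bQ unfolding block_diagonal_def by blast
      thus "\<exists>I\<in>P. i \<in> I \<and> j \<in> I" by blast
    qed
  qed
  hence "equiv_P P U ((\<lambda>x. transpose Q *v x) ` U)" unfolding equiv_P_def by blast
  hence "realizable ((\<lambda>x. transpose Q *v x) ` U)" using H by blast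
  then obtain Y where Y: "psd Y" "\<forall>i. Y$i$i = 1" "(\<lambda>x. transpose Q *v x) ` U \<subseteq> nullspace Y"
    unfolding realizable_def by blast
  define Y2 where "Y2 = Q ** Y ** transpose Q"
  have pY2: "psd Y2" unfolding Y2_def by (rule psd_conj[OF Y(1)])
  have nY2: "U \<subseteq> nullspace Y2"
  proof
    fix u assume u: "u \<in> U"
    hence "transpose Q *v u \<in> (\<lambda>x. transpose Q *v x) ` U" by (rule imageI)
    hence "transpose Q *v u \<in> nullspace Y" by (rule subsetD[OF Y(3)])
    hence "Y *v (transpose Q *v u) = 0" unfolding nullspace_def by simp
    moreover have "Q *v (Y *v (transpose Q *v u)) = Y2 *v u" unfolding Y2_def by (simp only: matrix_vector_mul_assoc matrix_mul_assoc)
    ultimately have "Y2 *v u = 0" by (metis matrix_vector_mult_0_right)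
    thus "u \<in> nullspace Y2" by (simp add: nullspace_def)
  qed
  have sY2: "transpose Y2 = Y2" using pY2 unfolding psd_def by blast
  have "0 \<le> W0 \<bullet> BD Y2" by (rule W0pos[OF pY2 nY2])
  hence "0 \<le> W \<bullet> Y2" using WY[OF sY2] by simp
  also have "W \<bullet> Y2 = trace (transpose Q ** W ** Q)"
  proof -
    define D where "D = transpose Q ** W ** Q"
    have tD: "transpose D = D"
      unfolding D_def by (simp only: matrix_transpose_mul transpose_transpose symW matrix_mul_assoc)
    have "W \<bullet> Y2 = trace (transpose W ** Y2)" by (rule inner_trace)
    also have "\<dots> = trace ((W ** Q ** Y) ** transpose Q)"
      by (simp only: symW Y2_def matrix_mul_assoc)
    also have "\<dots> = trace (transpose Q ** (W ** Q ** Y))"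
      by (rule trace_mul_sym)
    also have "\<dots> = trace (D ** Y)"
      unfolding D_def by (simp only: matrix_mul_assoc)
    also have "\<dots> = trace (transpose D ** Y)"
      by (simp only: tD)
    also have "\<dots> = D \<bullet> Y" by (rule inner_trace[symmetric])
    also have "\<dots> = (\<Sum>i\<in>UNIV. \<Sum>j\<in>UNIV. D$i$j * Y$i$j)" by (simp add: inner_vec_def)
    also have "\<dots> = (\<Sum>i\<in>UNIV. \<Sum>j\<in>UNIV. if j = i then D$i$i else 0)"
    proof (rule sum.cong[OF refl], rule sum.cong[OF refl])
      fix i j
      show "D$i$j * Y$i$j = (if j = i then D$i$i else 0)"
        using D[rule_format, of i j] Y(2) unfolding D_def by (cases "i = j") auto
    qed
    also have "\<dots> = trace D" by (simp add: trace_def)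
    finally show ?thesis unfolding D_def .
  qed
  also have "trace (transpose Q ** W ** Q) = trace W"
  proof -
    have QQ: "Q ** transpose Q = mat 1" using oQ by (simp add: orthogonal_matrix_def)
    have "trace (transpose Q ** W ** Q) = trace (Q ** (transpose Q ** W))"
      by (rule trace_mul_sym)
    also have "Q ** (transpose Q ** W) = W"
      by (simp only: matrix_mul_assoc QQ matrix_mul_lid)
    finally show ?thesis .
  qed
  finally show False using trW by simp
qed

theorem theorem5p7:
  fixes P :: "'n::finite set set" and U :: "(real^'n) set"
  assumes "is_partition P" and "subspace U"
  shows "P_realizable P U \<longleftrightarrow> (\<forall>U'. equiv_P P U U' \<longrightarrow> realizable U')"
proof
  assume "P_realizable P U"
  then obtain Y where Y: "Y \<in> E_P P" "U \<subseteq> nullspace Y" unfolding P_realizable_def by blast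
  show "\<forall>U'. equiv_P P U U' \<longrightarrow> realizable U'"
    using fwd[OF assms(1) Y] unfolding equiv_P_def by blast
next
  assume "\<forall>U'. equiv_P P U U' \<longrightarrow> realizable U'"
  thus "P_realizable P U" using bwd[OF assms(1)] by blast
qed

end
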